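(* Let $G$ be a graph with vertex set $A \cup B \cup C$, where $A, B, C$ are pairwise disjoint, $|A| = 2$, and $|B|, |C| \in \{3, 4\}$. Suppose that the bipartite graph of edges of $G$ between $B$ and $A \cup C$ is a complete bipartite graph between $B$ and $A \cup C$ minus a matching which has at most two edges between $B$ and $C$, and that $G$ has no edges between $A$ and $C$. Then there is a fractional triangle packing $\omega$ in $G$, assigning positive weight only to triangles that intersect exactly two of the sets $A, B, C$, such that $\omega(e) = 1/2$ for every edge $e$ of $G$ with both ends in $A$ or both ends in $C$, and $\omega(e) = 1$ for every edge $e$ of $G$ with both ends in $B$.
   Context: A fractional triangle packing in a graph $G$ is a function $\omega$ from the set of triangles of $G$ to $[0,1]$ such that $\omega(e) := \sum_{T \ni e}\omega(T) \le 1$ for every edge $e$ of $G$, where the sum is over triangles $T$ of $G$ containing $e$. *)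

theory Defs
  imports Complex_Main
begin

definition simple_graph :: "'a set \<Rightarrow> 'a set set \<Rightarrow> bool" where
  "simple_graph V E \<longleftrightarrow> finite V \<and> (\<forall>e\<in>E. e \<subseteq> V \<and> card e = 2)"

definition triangles :: "'a set set \<Rightarrow> 'a set set" where
  "triangles E = {T. card T = 3 \<and> (\<forall>x\<in>T. \<forall>y\<in>T. x \<noteq> y \<longrightarrow> {x, y} \<in> E)}"

definition edge_weight :: "'a set set \<Rightarrow> ('a set \<Rightarrow> real) \<Rightarrow> 'a set \<Rightarrow> real" where
  "edge_weight E \<omega> e = (\<Sum>T\<in>{T\<in>triangles E. e \<subseteq> T}. \<omega> T)"

definition fractional_triangle_packing :: "'a set set \<Rightarrow> ('a set \<Rightarrow> real) \<Rightarrow> bool" where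
  "fractional_triangle_packing E \<omega> \<longleftrightarrow>
     (\<forall>T\<in>triangles E. 0 \<le> \<omega> T \<and> \<omega> T \<le> 1) \<and>
     (\<forall>e\<in>E. edge_weight E \<omega> e \<le> 1)"

end

theory Submission imports Defs begin
definition part :: "nat \<Rightarrow> nat \<Rightarrow> nat" where
  "part n x = (if x < 2 then 0 else if x < n+2 then 1 else 2)"
definition mcp :: "nat \<Rightarrow> nat \<Rightarrow> nat \<Rightarrow> nat \<Rightarrow> bool" where
  "mcp n k u v = ((2 \<le> u \<and> u < 2+k \<and> v+2 = u) \<or> (2+k \<le> u \<and> u < n+2 \<and> v + k = u + n))"
definition okp :: "nat \<Rightarrow> nat \<Rightarrow> nat \<Rightarrow> nat \<Rightarrow> bool" where
  "okp n k u v = (\<not> mcp n k u v \<and> \<not> mcp n k v u \<and> \<not> (part n u = 0 \<and> part n v = 2) \<and> \<not> (part n u = 2 \<and> part n v = 0))"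
definition tri_ok :: "nat \<Rightarrow> nat \<Rightarrow> nat \<Rightarrow> nat list \<Rightarrow> bool" where
  "tri_ok n m k S = (length S = 3 \<and> distinct S \<and> (\<forall>x\<in>set S. x < n+m+2) \<and> (\<forall>x\<in>set S. \<forall>y\<in>set S. okp n k x y) \<and> card (part n ` set S) = 2)"
definition psum :: "(nat list \<times> nat) list \<Rightarrow> nat \<Rightarrow> nat \<Rightarrow> nat" where
  "psum L u v = sum_list (map (\<lambda>(S,q). if u \<in> set S \<and> v \<in> set S then q else 0) L)"
definition conc_ok :: "nat \<Rightarrow> nat \<Rightarrow> nat \<Rightarrow> (nat list \<times> nat) list \<Rightarrow> bool" where
  "conc_ok n m k L = ((\<forall>p\<in>set L. tri_ok n m k (fst p)) \<and>
     (\<forall>u\<in>set [0..<n+m+2]. \<forall>v\<in>set [0..<n+m+2]. u \<noteq> v \<longrightarrow>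
        ((part n u = part n v \<and> part n u \<noteq> 1 \<longrightarrow> psum L u v = 2) \<and>
         (part n u = 1 \<and> part n v = 1 \<longrightarrow> psum L u v = 4) \<and> psum L u v \<le> 4)))"
definition L432 :: "(nat list \<times> nat) list" where
  "L432 = [([2,6,7], 1), ([2,6,8], 1), ([2,3,8], 2), ([0,3,5], 1), ([4,7,8], 2), ([1,2,4], 3), ([2,3,7], 2), ([2,5,6], 2), ([4,5,8], 2), ([0,3,4], 3), ([2,5,8], 1), ([3,4,7], 1), ([3,5,6], 2), ([3,6,8], 1), ([3,5,8], 1), ([1,4,5], 1), ([3,6,7], 1), ([1,2,5], 1), ([2,4,7], 1), ([0,1,5], 2), ([0,4,5], 1)]"

definition L442 :: "(nat list \<times> nat) list" where
  "L442 = [([2,6,7], 2), ([2,3,8], 1), ([0,3,5], 1), ([2,4,9], 1), ([4,7,8], 2), ([1,2,4], 2), ([2,3,7], 1), ([2,5,6], 1), ([3,7,9], 2), ([0,3,4], 3), ([3,5,9], 1), ([2,5,8], 3), ([4,5,9], 1), ([4,8,9], 2), ([3,4,7], 1), ([3,5,6], 1), ([3,6,8], 2), ([3,5,8], 1), ([1,4,5], 2), ([5,6,9], 2), ([2,4,7], 1), ([2,3,9], 1), ([2,3,6], 1), ([0,1,5], 2), ([0,4,5], 1)]"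

definition L332 :: "(nat list \<times> nat) list" where
  "L332 = [([3,4,7], 1), ([3,5,6], 1), ([2,4,6], 1), ([1,2,4], 2), ([3,4,6], 1), ([2,5,6], 1), ([2,3,5], 1), ([2,4,7], 1), ([2,5,7], 2), ([2,3,7], 1), ([0,1,4], 2), ([4,6,7], 2), ([2,3,6], 2), ([0,3,4], 2)]"

definition L342 :: "(nat list \<times> nat) list" where
  "L342 = [([2,4,8], 2), ([4,7,8], 2), ([1,2,4], 2), ([2,3,7], 3), ([2,5,6], 2), ([2,5,7], 1), ([4,6,7], 2), ([3,5,7], 1), ([0,1,4], 2), ([0,3,4], 2), ([3,6,8], 2), ([3,5,8], 2), ([3,4,6], 2), ([2,3,5], 1)]"

definition L331 :: "(nat list \<times> nat) list" where
  "L331 = [([1,2,3], 1), ([3,4,7], 1), ([2,6,7], 1), ([4,5,7], 2), ([1,3,4], 1), ([3,6,7], 1), ([1,2,4], 3), ([2,3,7], 2), ([2,5,6], 2), ([2,4,7], 1), ([0,1,3], 2), ([2,3,6], 1), ([0,3,4], 2)]"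

definition L341 :: "(nat list \<times> nat) list" where
  "L341 = [([2,6,7], 1), ([2,4,8], 2), ([4,5,7], 2), ([3,4,8], 1), ([4,7,8], 1), ([1,2,4], 2), ([2,3,7], 1), ([2,5,6], 2), ([0,1,4], 2), ([0,3,4], 2), ([2,5,8], 2), ([1,2,3], 2), ([3,4,7], 1), ([3,6,8], 2), ([3,7,8], 1), ([3,6,7], 1), ([2,3,6], 1)]"

lemma conc_L432: "conc_ok 4 3 2 L432"
  unfolding conc_ok_def tri_ok_def okp_def mcp_def part_def psum_def L432_def
  by (simp add: upt_rec)

lemma conc_L442: "conc_ok 4 4 2 L442"
  unfolding conc_ok_def tri_ok_def okp_def mcp_def part_def psum_def L442_def
  by (simp add: upt_rec)

lemma conc_L332: "conc_ok 3 3 2 L332"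
  unfolding conc_ok_def tri_ok_def okp_def mcp_def part_def psum_def L332_def
  by (simp add: upt_rec)

lemma conc_L342: "conc_ok 3 4 2 L342"
  unfolding conc_ok_def tri_ok_def okp_def mcp_def part_def psum_def L342_def
  by (simp add: upt_rec)

lemma conc_L331: "conc_ok 3 3 1 L331"
  unfolding conc_ok_def tri_ok_def okp_def mcp_def part_def psum_def L331_def
  by (simp add: upt_rec)

lemma conc_L341: "conc_ok 3 4 1 L341"
  unfolding conc_ok_def tri_ok_def okp_def mcp_def part_def psum_def L341_def
  by (simp add: upt_rec)

lemma part_le: "part n x \<le> 2" by (simp add: part_def)

lemma transfer:
  fixes A B C :: "'a set" and E M :: "'a set set" and g :: "nat \<Rightarrow> 'a"
  assumes graph: "simple_graph (A \<union> B \<union> C) E"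
    and disj: "A \<inter> B = {}" "A \<inter> C = {}" "B \<inter> C = {}"
    and ne: "A \<noteq> {}" "B \<noteq> {}" "C \<noteq> {}"
    and bip: "\<forall>b\<in>B. \<forall>x\<in>A \<union> C. ({b, x} \<in> E \<longleftrightarrow> {b, x} \<notin> M)"
    and ginj: "inj_on g {0..<n+m+2}" and gim: "g ` {0..<n+m+2} = A \<union> B \<union> C"
    and hg: "\<And>i. i < n+m+2 \<Longrightarrow> (g i \<in> A \<longleftrightarrow> part n i = 0) \<and> (g i \<in> B \<longleftrightarrow> part n i = 1) \<and> (g i \<in> C \<longleftrightarrow> part n i = 2)"
    and Mc: "\<And>u v. u < n+m+2 \<Longrightarrow> v < n+m+2 \<Longrightarrow> part n u = 1 \<Longrightarrow> part n v \<noteq> 1 \<Longrightarrow> {g u, g v} \<in> M \<Longrightarrow> mcp n k u v"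
    and conc: "conc_ok n m k L"
  shows "\<exists>\<omega>. fractional_triangle_packing E \<omega> \<and>
           (\<forall>T\<in>triangles E. \<omega> T > 0 \<longrightarrow> card {X\<in>{A, B, C}. T \<inter> X \<noteq> {}} = 2) \<and>
           (\<forall>e\<in>E. (e \<subseteq> A \<or> e \<subseteq> C) \<longrightarrow> edge_weight E \<omega> e = 1/2) \<and>
           (\<forall>e\<in>E. e \<subseteq> B \<longrightarrow> edge_weight E \<omega> e = 1)"
proof -
  define N where "N = n+m+2"
  define S where "S i = set (fst (L!i))" for i
  define w where "w i = real (snd (L!i)) / 4" for i
  define I where "I = {..<length L}"
  define \<omega> where "\<omega> T = (\<Sum>i\<in>I. if T = g ` S i then w i else 0)" for T
  have finI: "finite I" unfolding I_def by simp
  have w0: "\<And>i. 0 \<le> w i" by (simp add: w_def)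
  have conc1: "\<And>i. i \<in> I \<Longrightarrow> tri_ok n m k (fst (L!i))"
    using conc unfolding conc_ok_def I_def by auto
  have conc2: "\<And>u v. u < N \<Longrightarrow> v < N \<Longrightarrow> u \<noteq> v \<Longrightarrow>
     (part n u = part n v \<and> part n u \<noteq> 1 \<longrightarrow> psum L u v = 2) \<and>
     (part n u = 1 \<and> part n v = 1 \<longrightarrow> psum L u v = 4) \<and> psum L u v \<le> 4"
  proof -
    fix u v assume uv: "u < N" "v < N" "u \<noteq> v"
    have "\<forall>u\<in>set [0..<N]. \<forall>v\<in>set [0..<N]. u \<noteq> v \<longrightarrow>
        ((part n u = part n v \<and> part n u \<noteq> 1 \<longrightarrow> psum L u v = 2) \<and>
         (part n u = 1 \<and> part n v = 1 \<longrightarrow> psum L u v = 4) \<and> psum L u v \<le> 4)"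
      using conc unfolding conc_ok_def N_def by (rule conjunct2)
    then show "(part n u = part n v \<and> part n u \<noteq> 1 \<longrightarrow> psum L u v = 2) \<and>
     (part n u = 1 \<and> part n v = 1 \<longrightarrow> psum L u v = 4) \<and> psum L u v \<le> 4"
      using uv by simp
  qed
  have SN: "\<And>i. i \<in> I \<Longrightarrow> S i \<subseteq> {0..<N}"
    using conc1 unfolding tri_ok_def S_def N_def by auto
  have psum_eq: "real (psum L u v) / 4 = (\<Sum>i\<in>I. if u \<in> S i \<and> v \<in> S i then w i else 0)" for u v
  proof -
    have "psum L u v = (\<Sum>i\<in>I. if u \<in> S i \<and> v \<in> S i then snd (L!i) else 0)"
      unfolding psum_def sum_list_sum_nth I_def S_def atLeast0LessThan
      by (simp add: case_prod_beta)
    then have "real (psum L u v) = (\<Sum>i\<in>I. if u \<in> S i \<and> v \<in> S i then real (snd (L!i)) else 0)"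
      by (simp only: of_nat_sum if_distrib of_nat_0)
    then have "real (psum L u v) / 4 = (\<Sum>i\<in>I. (if u \<in> S i \<and> v \<in> S i then real (snd (L!i)) else 0) / 4)"
      by (simp add: sum_divide_distrib)
    also have "\<dots> = (\<Sum>i\<in>I. if u \<in> S i \<and> v \<in> S i then w i else 0)"
      by (rule sum.cong) (auto simp: w_def)
    finally show ?thesis .
  qed
  have V: "finite (A \<union> B \<union> C)" "\<And>e. e \<in> E \<Longrightarrow> e \<subseteq> A \<union> B \<union> C \<and> card e = 2"
    using graph unfolding simple_graph_def by auto
  have triV: "T \<subseteq> A \<union> B \<union> C" if "T \<in> triangles E" for T
  proof
    fix x assume x: "x \<in> T"
    have c3: "card T = 3" using that unfolding triangles_def by auto
    then have "card (T - {x}) = 2" using x by simp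
    then have "T - {x} \<noteq> {}" by (metis card.empty zero_neq_numeral)
    then obtain y where "y \<in> T" "y \<noteq> x" by blast
    then have "{x, y} \<in> E" using that x unfolding triangles_def by auto
    then show "x \<in> A \<union> B \<union> C" using V(2) by auto
  qed
  have finT: "finite (triangles E)"
    by (rule finite_subset[of _ "Pow (A \<union> B \<union> C)"]) (use triV V(1) in auto)
  have EW: "edge_weight E \<omega> {g u, g v} =
      (\<Sum>i\<in>I. if g ` S i \<in> triangles E \<and> u \<in> S i \<and> v \<in> S i then w i else 0)"
    if uv: "u < N" "v < N" for u v
  proof -
    have fin: "finite {T\<in>triangles E. {g u, g v} \<subseteq> T}" using finT by simp
    have "edge_weight E \<omega> {g u, g v} = (\<Sum>T\<in>{T\<in>triangles E. {g u, g v} \<subseteq> T}. \<Sum>i\<in>I. if T = g ` S i then w i else 0)"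
      unfolding edge_weight_def \<omega>_def by simp
    also have "\<dots> = (\<Sum>i\<in>I. \<Sum>T\<in>{T\<in>triangles E. {g u, g v} \<subseteq> T}. if T = g ` S i then w i else 0)"
      by (rule sum.swap)
    also have "\<dots> = (\<Sum>i\<in>I. if g ` S i \<in> {T\<in>triangles E. {g u, g v} \<subseteq> T} then w i else 0)"
      using fin by (simp add: sum.delta)
    also have "\<dots> = (\<Sum>i\<in>I. if g ` S i \<in> triangles E \<and> u \<in> S i \<and> v \<in> S i then w i else 0)"
    proof (rule sum.cong)
      fix i assume "i \<in> I"
      then have "S i \<subseteq> {0..<N}" by (rule SN)
      then have "g u \<in> g ` S i \<longleftrightarrow> u \<in> S i" "g v \<in> g ` S i \<longleftrightarrow> v \<in> S i"
        using ginj uv unfolding N_def by (auto simp: inj_on_image_mem_iff)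
      then show "(if g ` S i \<in> {T\<in>triangles E. {g u, g v} \<subseteq> T} then w i else 0) =
          (if g ` S i \<in> triangles E \<and> u \<in> S i \<and> v \<in> S i then w i else 0)" by auto
    qed simp
    finally show ?thesis .
  qed
  have cross: "{g p, g q} \<in> E"
    if pq: "p < N" "q < N" "part n p \<noteq> part n q" "okp n k p q" for p q
  proof -
    have "part n p \<le> 2" "part n q \<le> 2" by (rule part_le)+
    then consider "part n p = 1" "part n q \<noteq> 1" | "part n q = 1" "part n p \<noteq> 1"
      using pq(3,4) unfolding okp_def by linarith
    then show ?thesis
    proof cases
      case 1
      have "g p \<in> B" "g q \<in> A \<union> C" using hg[of p] hg[of q] pq 1 \<open>part n q \<le> 2\<close> unfolding N_def by auto
      moreover have "{g p, g q} \<notin> M" using Mc[of p q] pq 1 unfolding N_def okp_def by auto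
      ultimately show ?thesis using bip by auto
    next
      case 2
      have "g q \<in> B" "g p \<in> A \<union> C" using hg[of p] hg[of q] pq 2 \<open>part n p \<le> 2\<close> unfolding N_def by auto
      moreover have "{g q, g p} \<notin> M" using Mc[of q p] pq 2 unfolding N_def okp_def by auto
      ultimately have "{g q, g p} \<in> E" using bip by auto
      then show ?thesis by (simp add: insert_commute)
    qed
  qed
  have TRI: "g ` S i \<in> triangles E"
    if hyp: "i \<in> I" "u \<in> S i" "v \<in> S i" "u \<noteq> v" "part n u = part n v" "{g u, g v} \<in> E" for i u v
  proof -
    have t: "tri_ok n m k (fst (L!i))" using conc1 hyp(1) .
    have c3: "card (S i) = 3" using t unfolding tri_ok_def S_def by (simp add: distinct_card)
    have fS: "finite (S i)" unfolding S_def by simp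
    have "card (S i - {u, v}) = 1" using c3 hyp(2-4) fS by (simp add: card_Diff_subset)
    then have "S i - {u, v} \<noteq> {}" by (metis card.empty zero_neq_one)
    then obtain z where z: "z \<in> S i" "z \<noteq> u" "z \<noteq> v" by blast
    have Seq: "S i = {u, v, z}"
    proof -
      have "{u, v, z} \<subseteq> S i" using z hyp by auto
      moreover have "card {u, v, z} = 3" using z hyp(4) by auto
      ultimately show ?thesis using card_subset_eq[OF fS] c3 by metis
    qed
    have pz: "part n z \<noteq> part n u"
    proof
      assume "part n z = part n u"
      then have "part n ` S i = {part n u}" using Seq hyp(5) by auto
      then show False using t unfolding tri_ok_def S_def by simp
    qed
    have inj: "inj_on g (S i)" using ginj SN[OF hyp(1)] unfolding N_def by (rule inj_on_subset)
    have ok: "\<And>p q. p \<in> S i \<Longrightarrow> q \<in> S i \<Longrightarrow> okp n k p q" using t unfolding tri_ok_def S_def by auto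
    have pN: "\<And>p. p \<in> S i \<Longrightarrow> p < N" using SN[OF hyp(1)] by auto
    show ?thesis unfolding triangles_def
    proof (intro CollectI conjI ballI impI)
      show "card (g ` S i) = 3" using c3 inj by (simp add: card_image)
    next
      fix x y assume xy: "x \<in> g ` S i" "y \<in> g ` S i" "x \<noteq> y"
      then obtain p q where p: "p \<in> S i" "x = g p" and q: "q \<in> S i" "y = g q" by auto
      with xy have pq: "p \<noteq> q" by auto
      show "{x, y} \<in> E"
      proof (cases "part n p = part n q")
        case True
        have "p \<in> {u, v}" "q \<in> {u, v}" using True p q pq Seq pz hyp(5) by auto
        then have "{x, y} = {g u, g v}" using p q pq by auto
        then show ?thesis using hyp(6) by simp
      next
        case False
        then show ?thesis using cross[of p q] p q ok pN by auto
      qed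
    qed
  qed
  have Eform: "\<exists>u v. u < N \<and> v < N \<and> u \<noteq> v \<and> e = {g u, g v}" if "e \<in> E" for e
  proof -
    have "e \<subseteq> A \<union> B \<union> C" "card e = 2" using V(2) that by auto
    then obtain x y where "e = {x, y}" "x \<noteq> y" "x \<in> A \<union> B \<union> C" "y \<in> A \<union> B \<union> C"
      unfolding card_2_iff by blast
    moreover obtain u where "u < N" "x = g u"
      using \<open>x \<in> A \<union> B \<union> C\<close> gim unfolding N_def by (metis atLeastLessThan_iff imageE)
    moreover obtain v where "v < N" "y = g v"
      using \<open>y \<in> A \<union> B \<union> C\<close> gim unfolding N_def by (metis atLeastLessThan_iff imageE)
    ultimately show ?thesis by blast
  qed
  have load_le: "edge_weight E \<omega> e \<le> 1" if eE: "e \<in> E" for e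
  proof -
    obtain u v where uv: "u < N" "v < N" "u \<noteq> v" "e = {g u, g v}" using Eform[OF eE] by blast
    have "edge_weight E \<omega> e \<le> (\<Sum>i\<in>I. if u \<in> S i \<and> v \<in> S i then w i else 0)"
      unfolding uv(4) EW[OF uv(1,2)] by (rule sum_mono) (auto simp: w0)
    also have "\<dots> = real (psum L u v) / 4" by (rule psum_eq[symmetric])
    also have "\<dots> \<le> 1" using conc2[OF uv(1-3)] by simp
    finally show ?thesis .
  qed
  have load_int: "edge_weight E \<omega> {g u, g v} = real (psum L u v) / 4"
    if uv: "u < N" "v < N" "u \<noteq> v" "part n u = part n v" "{g u, g v} \<in> E" for u v
    unfolding EW[OF uv(1,2)] psum_eq
    by (rule sum.cong) (use TRI uv in auto)
  have pos: "\<omega> T \<ge> 0" for T unfolding \<omega>_def by (rule sum_nonneg) (simp add: w0)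
  have le1: "\<omega> T \<le> 1" if T: "T \<in> triangles E" for T
  proof -
    have c3: "card T = 3" using T unfolding triangles_def by auto
    then obtain x y where xy: "x \<in> T" "y \<in> T" "x \<noteq> y"
      unfolding card_3_iff by blast
    then have e: "{x, y} \<in> E" using T unfolding triangles_def by auto
    have "\<omega> T \<le> edge_weight E \<omega> {x, y}"
      unfolding edge_weight_def
      by (rule member_le_sum) (use xy T finT pos in auto)
    also have "\<dots> \<le> 1" by (rule load_le[OF e])
    finally show ?thesis .
  qed
  have distinctABC: "A \<noteq> B" "A \<noteq> C" "B \<noteq> C" using disj ne by auto
  have mixed: "card {X\<in>{A, B, C}. T \<inter> X \<noteq> {}} = 2" if T: "T \<in> triangles E" "\<omega> T > 0" for T
  proof -
    obtain i where i: "i \<in> I" "T = g ` S i"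
    proof (rule ccontr)
      assume "\<not> thesis"
      then have "\<forall>i\<in>I. T \<noteq> g ` S i" using that by blast
      then have "\<omega> T = 0" unfolding \<omega>_def by simp
      then show False using T by simp
    qed
    have t: "tri_ok n m k (fst (L!i))" using conc1 i(1) .
    define blk where "blk j = (if j = 0 then A else if j = (1::nat) then B else C)" for j
    have pN: "\<And>p. p \<in> S i \<Longrightarrow> p < N" using SN[OF i(1)] by auto
    have p012: "part n p \<in> {0,1,2}" for p by (auto simp: part_def)
    have hg': "g p \<in> blk (part n p)" if "p \<in> S i" for p
    proof -
      have "part n p = 0 \<or> part n p = 1 \<or> part n p = 2" using p012[of p] by simp
      then show ?thesis using hg[of p] pN[OF that] unfolding blk_def N_def by auto
    qed
    have eq: "{X\<in>{A, B, C}. T \<inter> X \<noteq> {}} = blk ` part n ` S i"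
    proof (intro equalityI subsetI)
      fix X assume "X \<in> {X\<in>{A, B, C}. T \<inter> X \<noteq> {}}"
      then obtain p where p: "p \<in> S i" "g p \<in> X" "X \<in> {A, B, C}" using i by auto
      have "X = blk (part n p)"
        using p hg'[OF p(1)] disj unfolding blk_def by (auto split: if_splits)
      then show "X \<in> blk ` part n ` S i" using p by auto
    next
      fix X assume "X \<in> blk ` part n ` S i"
      then obtain p where p: "p \<in> S i" "X = blk (part n p)" by auto
      then show "X \<in> {X\<in>{A, B, C}. T \<inter> X \<noteq> {}}"
        using hg'[OF p(1)] i unfolding blk_def by auto
    qed
    have "inj_on blk {0,1,2}"
      unfolding inj_on_def blk_def using distinctABC by auto
    then have "inj_on blk (part n ` S i)" by (rule inj_on_subset) (rule image_subsetI, rule p012)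
    then have "card (blk ` part n ` S i) = card (part n ` S i)" by (rule card_image)
    also have "\<dots> = 2" using t unfolding tri_ok_def S_def by simp
    finally show ?thesis using eq by simp
  qed
  have intA: "edge_weight E \<omega> e = 1/2" if e: "e \<in> E" "e \<subseteq> A \<or> e \<subseteq> C" for e
  proof -
    obtain u v where uv: "u < N" "v < N" "u \<noteq> v" "e = {g u, g v}" using Eform e(1) by blast
    have "(part n u = 0 \<and> part n v = 0) \<or> (part n u = 2 \<and> part n v = 2)"
      using e(2) hg[of u] hg[of v] uv unfolding N_def by auto
    then have "part n u = part n v" "part n u \<noteq> 1" by auto
    then have "psum L u v = 2" using conc2[OF uv(1-3)] by simp
    then show ?thesis using load_int[OF uv(1-3) \<open>part n u = part n v\<close>] e(1) uv(4) by simp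
  qed
  have intB: "edge_weight E \<omega> e = 1" if e: "e \<in> E" "e \<subseteq> B" for e
  proof -
    obtain u v where uv: "u < N" "v < N" "u \<noteq> v" "e = {g u, g v}" using Eform e(1) by blast
    have "part n u = 1" "part n v = 1"
      using e(2) hg[of u] hg[of v] uv unfolding N_def by auto
    then have "psum L u v = 4" using conc2[OF uv(1-3)] by simp
    then show ?thesis using load_int[OF uv(1-3)] \<open>part n u = 1\<close> \<open>part n v = 1\<close> e(1) uv(4) by simp
  qed
  have ftp: "fractional_triangle_packing E \<omega>"
    unfolding fractional_triangle_packing_def using pos le1 load_le by auto
  show ?thesis
    apply (rule exI[of _ \<omega>])
    apply (intro conjI ballI impI ftp)
      apply (erule (1) mixed)
     apply (erule (1) intA)
    apply (erule (1) intB)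
    done
qed

lemma extend_inj:
  assumes "finite X" "finite Y" "X0 \<subseteq> X" "inj_on f X0" "f ` X0 \<subseteq> Y" "card X \<le> card Y"
  shows "\<exists>h. inj_on h X \<and> h ` X \<subseteq> Y \<and> (\<forall>x\<in>X0. h x = f x)"
proof -
  have fX0: "finite X0" using assms finite_subset by blast
  have "card (X - X0) \<le> card (Y - f ` X0)"
  proof -
    have "card (X - X0) = card X - card X0" using assms fX0 by (simp add: card_Diff_subset)
    moreover have "card (Y - f ` X0) = card Y - card X0"
      using assms fX0 by (simp add: card_Diff_subset card_image)
    moreover have "card X0 \<le> card X" using assms by (simp add: card_mono)
    ultimately show ?thesis using assms(6) by linarith
  qed
  then obtain j where j: "j ` (X - X0) \<subseteq> Y - f ` X0" "inj_on j (X - X0)"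
    using card_le_inj[of "X - X0" "Y - f ` X0"] assms by auto
  define h where "h x = (if x \<in> X0 then f x else j x)" for x
  have "inj_on h X"
  proof (rule inj_onI)
    fix x y assume xy: "x \<in> X" "y \<in> X" "h x = h y"
    show "x = y"
    proof (cases "x \<in> X0"; cases "y \<in> X0")
      assume "x \<in> X0" "y \<in> X0" then show ?thesis using xy assms(4) unfolding h_def inj_on_def by auto
    next
      assume "x \<in> X0" "y \<notin> X0" then have "j y \<in> Y - f ` X0" using j xy by auto
      then show ?thesis using xy \<open>x \<in> X0\<close> \<open>y \<notin> X0\<close> unfolding h_def by (metis DiffD2 imageI)
    next
      assume "x \<notin> X0" "y \<in> X0" then have "j x \<in> Y - f ` X0" using j xy by auto
      then show ?thesis using xy \<open>x \<notin> X0\<close> \<open>y \<in> X0\<close> unfolding h_def by (metis DiffD2 imageI)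
    next
      assume "x \<notin> X0" "y \<notin> X0" then show ?thesis using xy j(2) unfolding h_def inj_on_def by auto
    qed
  qed
  moreover have "h ` X \<subseteq> Y" using j assms(5) unfolding h_def by auto
  moreover have "\<forall>x\<in>X0. h x = f x" unfolding h_def by auto
  ultimately show ?thesis by blast
qed

theorem proposition7p3:
  fixes A B C :: "'a set" and E :: "'a set set" and M :: "'a set set"
  assumes graph: "simple_graph (A \<union> B \<union> C) E"
    and disj: "A \<inter> B = {}" "A \<inter> C = {}" "B \<inter> C = {}"
    and cardA: "card A = 2"
    and cardB: "card B \<in> {3, 4}"
    and cardC: "card C \<in> {3, 4}"
    and M_pairs: "\<forall>e\<in>M. \<exists>b\<in>B. \<exists>x\<in>A \<union> C. e = {b, x}"
    and M_matching: "\<forall>e\<in>M. \<forall>f\<in>M. e \<noteq> f \<longrightarrow> e \<inter> f = {}"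
    and bip: "\<forall>b\<in>B. \<forall>x\<in>A \<union> C. ({b, x} \<in> E \<longleftrightarrow> {b, x} \<notin> M)"
    and M_BC: "card {e\<in>M. e \<inter> C \<noteq> {}} \<le> 2"
    and noAC: "\<forall>a\<in>A. \<forall>c\<in>C. {a, c} \<notin> E"
  shows "\<exists>\<omega>. fractional_triangle_packing E \<omega> \<and>
           (\<forall>T\<in>triangles E. \<omega> T > 0 \<longrightarrow> card {X\<in>{A, B, C}. T \<inter> X \<noteq> {}} = 2) \<and>
           (\<forall>e\<in>E. (e \<subseteq> A \<or> e \<subseteq> C) \<longrightarrow> edge_weight E \<omega> e = 1/2) \<and>
           (\<forall>e\<in>E. e \<subseteq> B \<longrightarrow> edge_weight E \<omega> e = 1)"
proof -
  have finV: "finite (A \<union> B \<union> C)" using graph unfolding simple_graph_def by auto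
  then have finA: "finite A" and finB: "finite B" and finC: "finite C" by auto
  define n where "n = card B"
  define m where "m = card C"
  have n34: "n = 3 \<or> n = 4" and m34: "m = 3 \<or> m = 4" using cardB cardC n_def m_def by auto
  have ne: "A \<noteq> {}" "B \<noteq> {}" "C \<noteq> {}" using cardA n34 m34 n_def m_def by auto
  have Mfin: "finite M"
  proof (rule finite_subset[of _ "Pow (A \<union> B \<union> C)"])
    show "M \<subseteq> Pow (A \<union> B \<union> C)"
    proof
      fix e assume "e \<in> M"
      then obtain b x where "b \<in> B" "x \<in> A \<union> C" "e = {b, x}" using M_pairs by blast
      then show "e \<in> Pow (A \<union> B \<union> C)" by auto
    qed
  qed (use finV in simp)
  have uniq: "x = y" if "b \<in> B" "x \<in> A \<union> C" "y \<in> A \<union> C" "{b, x} \<in> M" "{b, y} \<in> M" for b x y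
  proof -
    have "{b, x} = {b, y}"
    proof (rule ccontr)
      assume ne: "{b, x} \<noteq> {b, y}"
      have "{b, x} \<inter> {b, y} = {}" by (rule M_matching[rule_format, OF that(4) that(5) ne])
      then show False by simp
    qed
    moreover have "x \<noteq> b" using that disj by auto
    ultimately show ?thesis by (auto simp: doubleton_eq_iff)
  qed
  have inj2: "b = b'" if "b \<in> B" "b' \<in> B" "x \<in> A \<union> C" "{b, x} \<in> M" "{b', x} \<in> M" for b b' x
  proof -
    have "{b, x} = {b', x}"
    proof (rule ccontr)
      assume ne: "{b, x} \<noteq> {b', x}"
      have "{b, x} \<inter> {b', x} = {}" by (rule M_matching[rule_format, OF that(4) that(5) ne])
      then show False by simp
    qed
    moreover have "x \<noteq> b" using that disj by auto
    ultimately show ?thesis by (auto simp: doubleton_eq_iff)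
  qed
  define f where "f b = (SOME x. x \<in> A \<union> C \<and> {b, x} \<in> M)" for b
  have fprop: "x = f b \<and> f b \<in> A \<union> C \<and> {b, f b} \<in> M" if "b \<in> B" "x \<in> A \<union> C" "{b, x} \<in> M" for b x
  proof -
    have "f b \<in> A \<union> C \<and> {b, f b} \<in> M" unfolding f_def by (rule someI[of _ x]) (use that in auto)
    then show ?thesis using uniq[of b x "f b"] that by auto
  qed
  define BA where "BA = {b\<in>B. \<exists>a\<in>A. {b, a} \<in> M}"
  define BC where "BC = {b\<in>B. \<exists>c\<in>C. {b, c} \<in> M}"
  have BAB: "BA \<subseteq> B" "BC \<subseteq> B" unfolding BA_def BC_def by auto
  have fA: "f b \<in> A \<and> {b, f b} \<in> M" if bX: "b \<in> BA" for b
  proof -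
    obtain a where "b \<in> B" "a \<in> A" "{b, a} \<in> M" using bX unfolding BA_def by auto
    then show ?thesis using fprop[of b a] by auto
  qed
  have fC: "f b \<in> C \<and> {b, f b} \<in> M" if bX: "b \<in> BC" for b
  proof -
    obtain c where "b \<in> B" "c \<in> C" "{b, c} \<in> M" using bX unfolding BC_def by auto
    then show ?thesis using fprop[of b c] by auto
  qed
  have BAC: "BA \<inter> BC = {}" using fA fC disj by blast
  have injA: "inj_on f BA"
  proof (rule inj_onI)
    fix x y assume "x \<in> BA" "y \<in> BA" "f x = f y"
    then show "x = y" using inj2[of x y "f x"] fA[of x] fA[of y] BAB by auto
  qed
  have injC: "inj_on f BC"
  proof (rule inj_onI)
    fix x y assume "x \<in> BC" "y \<in> BC" "f x = f y"
    then show "x = y" using inj2[of x y "f x"] fC[of x] fC[of y] BAB by auto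
  qed
  have cBA: "card BA \<le> 2" using card_inj_on_le[OF injA _ finA] fA cardA by auto
  have cBC: "card BC \<le> 2"
  proof -
    have "inj_on (\<lambda>b. {b, f b}) BC"
    proof (rule inj_onI)
      fix x y assume xy: "x \<in> BC" "y \<in> BC" "{x, f x} = {y, f y}"
      have "x \<noteq> f y" using xy fC[of y] BAB disj by auto
      then show "x = y" using xy(3) by (auto simp: doubleton_eq_iff)
    qed
    moreover have "(\<lambda>b. {b, f b}) ` BC \<subseteq> {e\<in>M. e \<inter> C \<noteq> {}}" using fC by auto
    moreover have "finite {e\<in>M. e \<inter> C \<noteq> {}}" using Mfin by simp
    ultimately have "card BC \<le> card {e\<in>M. e \<inter> C \<noteq> {}}" by (rule card_inj_on_le)
    then show ?thesis using M_BC by simp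
  qed
  define k where "k = (if n = 4 then 2 else if card BC = 2 then 1 else (2::nat))"
  have cBmBC: "card (B - BC) = n - card BC"
    using finB BAB n_def by (simp add: card_Diff_subset finite_subset)
  have BAsub: "BA \<subseteq> B - BC" using BAB BAC by auto
  have "card BA \<le> card (B - BC)" using BAsub finB by (simp add: card_mono)
  then have k_props: "1 \<le> k" "k \<le> 2" "card BA \<le> k" "k \<le> card (B - BC)" "n - k \<le> 2" "k \<le> n"
    using n34 cBC cBA cBmBC unfolding k_def by auto
  obtain B1 where B1: "BA \<subseteq> B1" "B1 \<subseteq> B - BC" "card B1 = k"
    using exists_subset_between[of BA k "B - BC"] k_props finB BAsub by auto
  define B2 where "B2 = B - B1"
  have finB1: "finite B1" using B1(2) finB finite_subset by blast
  have B1B: "B1 \<subseteq> B" using B1(2) by auto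
  have B2: "BC \<subseteq> B2" "card B2 = n - k" "B1 \<subseteq> B" "finite B2"
    using B1 finB finB1 BAB B1B card_Diff_subset[OF finB1 B1B] unfolding B2_def n_def by auto
  have fBA: "f ` BA \<subseteq> A" using fA by auto
  have fBC: "f ` BC \<subseteq> C" using fC by auto
  obtain h1 where h1: "inj_on h1 B1" "h1 ` B1 \<subseteq> A" "\<forall>b\<in>BA. h1 b = f b"
    using extend_inj[of B1 A BA f] finB1 finA B1 injA fBA k_props cardA by auto
  obtain h2 where h2: "inj_on h2 B2" "h2 ` B2 \<subseteq> C" "\<forall>b\<in>BC. h2 b = f b"
    using extend_inj[of B2 C BC f] B2 finC injC fBC k_props m34 m_def by auto
  obtain e1 where e1: "bij_betw e1 {0..<k} B1" using ex_bij_betw_nat_finite[OF finB1] B1(3) by auto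
  obtain e2 where e2: "bij_betw e2 {0..<n-k} B2" using ex_bij_betw_nat_finite[OF B2(4)] B2(2) by auto
  have cAR: "card (A - h1 ` B1) = 2 - k"
    using h1 finA B1(3) cardA by (simp add: card_Diff_subset card_image finite_subset)
  obtain aR where aR: "bij_betw aR {0..<2-k} (A - h1 ` B1)"
    using ex_bij_betw_nat_finite[of "A - h1 ` B1"] finA cAR by auto
  have cCR: "card (C - h2 ` B2) = m - (n - k)"
    using h2 finC B2 m_def by (simp add: card_Diff_subset card_image finite_subset)
  obtain cR where cR: "bij_betw cR {0..<m-(n-k)} (C - h2 ` B2)"
    using ex_bij_betw_nat_finite[of "C - h2 ` B2"] finC cCR by auto
  define xa where "xa = map (h1 \<circ> e1) [0..<k] @ map aR [0..<2-k]"
  define xb where "xb = map e1 [0..<k] @ map e2 [0..<n-k]"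
  define xc where "xc = map (h2 \<circ> e2) [0..<n-k] @ map cR [0..<m-(n-k)]"
  define xs where "xs = xa @ xb @ xc"
  define g where "g i = xs ! i" for i
  have lxa: "length xa = 2" using k_props unfolding xa_def by simp
  have lxb: "length xb = n" using k_props unfolding xb_def by simp
  have lxc: "length xc = m" using k_props m34 unfolding xc_def by auto
  have lxs: "length xs = n+m+2" using lxa lxb lxc unfolding xs_def by simp
  have e1i: "e1 ` {0..<k} = B1" "inj_on e1 {0..<k}" using e1 by (auto simp: bij_betw_def)
  have e2i: "e2 ` {0..<n-k} = B2" "inj_on e2 {0..<n-k}" using e2 by (auto simp: bij_betw_def)
  have aRi: "aR ` {0..<2-k} = A - h1 ` B1" "inj_on aR {0..<2-k}" using aR by (auto simp: bij_betw_def)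
  have cRi: "cR ` {0..<m-(n-k)} = C - h2 ` B2" "inj_on cR {0..<m-(n-k)}" using cR by (auto simp: bij_betw_def)
  have sxa: "set xa = A"
  proof -
    have "set xa = h1 ` (e1 ` {0..<k}) \<union> aR ` {0..<2-k}" unfolding xa_def by (simp add: image_comp)
    also have "\<dots> = A" using e1i aRi h1 by auto
    finally show ?thesis .
  qed
  have sxb: "set xb = B"
  proof -
    have "set xb = e1 ` {0..<k} \<union> e2 ` {0..<n-k}" unfolding xb_def by simp
    also have "\<dots> = B" using e1i e2i B2 unfolding B2_def by auto
    finally show ?thesis .
  qed
  have sxc: "set xc = C"
  proof -
    have "set xc = h2 ` (e2 ` {0..<n-k}) \<union> cR ` {0..<m-(n-k)}" unfolding xc_def by (simp add: image_comp)
    also have "\<dots> = C" using e2i cRi h2 by auto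
    finally show ?thesis .
  qed
  have dxa: "distinct xa"
  proof -
    have "inj_on (h1 \<circ> e1) {0..<k}" using e1i h1 by (intro comp_inj_on) auto
    then show ?thesis unfolding xa_def using aRi e1i by (auto simp: distinct_map)
  qed
  have dxb: "distinct xb"
    unfolding xb_def using e1i e2i unfolding B2_def by (auto simp: distinct_map)
  have dxc: "distinct xc"
  proof -
    have "inj_on (h2 \<circ> e2) {0..<n-k}" using e2i h2 by (intro comp_inj_on) auto
    then show ?thesis unfolding xc_def using cRi e2i by (auto simp: distinct_map)
  qed
  have dxs: "distinct xs" using dxa dxb dxc sxa sxb sxc disj unfolding xs_def by auto
  have ginj: "inj_on g {0..<n+m+2}" unfolding g_def by (rule inj_on_nth) (use dxs lxs in auto)
  have gim: "g ` {0..<n+m+2} = A \<union> B \<union> C"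
  proof -
    have "g ` {0..<n+m+2} = set xs" unfolding g_def using lxs by (auto simp: set_conv_nth)
    then show ?thesis using sxa sxb sxc unfolding xs_def by auto
  qed
  have gA: "g i = xa ! i" if "i < 2" for i using that lxa by (simp add: g_def xs_def nth_append)
  have gB: "g i = xb ! (i-2)" if "2 \<le> i" "i < n+2" for i
  proof -
    have "\<not> i < 2" "i - 2 < n" using that by linarith+
    then show ?thesis using lxa lxb by (simp add: g_def xs_def nth_append)
  qed
  have gC: "g i = xc ! (i-n-2)" if "n+2 \<le> i" for i
  proof -
    have "\<not> i < 2" "\<not> i - 2 < n" "i - 2 - n = i - n - 2" using that by linarith+
    then show ?thesis using lxa lxb by (simp add: g_def xs_def nth_append)
  qed
  have hg: "(g i \<in> A \<longleftrightarrow> part n i = 0) \<and> (g i \<in> B \<longleftrightarrow> part n i = 1) \<and> (g i \<in> C \<longleftrightarrow> part n i = 2)"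
    if i: "i < n+m+2" for i
  proof -
    consider "i < 2" | "2 \<le> i" "i < n+2" | "n+2 \<le> i" by linarith
    then show ?thesis
    proof cases
      case 1
      then have "xa ! i \<in> set xa" using lxa by (intro nth_mem) simp
      then have "g i \<in> A" using gA[OF 1] sxa by simp
      then show ?thesis using 1 disj unfolding part_def by auto
    next
      case 2
      have "i - 2 < length xb" using 2 lxb by linarith
      then have "xb ! (i-2) \<in> set xb" by (rule nth_mem)
      then have "g i \<in> B" using gB[OF 2] sxb by simp
      then show ?thesis using 2 disj unfolding part_def by auto
    next
      case 3
      then have "i - n - 2 < m" using i by linarith
      then have "xc ! (i-n-2) \<in> set xc" using lxc by (intro nth_mem) simp
      then have "g i \<in> C" using gC[OF 3] sxc by simp
      then show ?thesis using 3 disj unfolding part_def by auto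
    qed
  qed
  have xa_nth: "xa ! j = h1 (e1 j)" if "j < k" for j using that unfolding xa_def by (simp add: nth_append)
  have xb_nth1: "xb ! j = e1 j" if "j < k" for j using that unfolding xb_def by (simp add: nth_append)
  have xb_nth2: "xb ! j = e2 (j-k)" if "k \<le> j" "j < n" for j using that unfolding xb_def by (simp add: nth_append)
  have xc_nth: "xc ! j = h2 (e2 j)" if "j < n-k" for j using that unfolding xc_def by (simp add: nth_append)
  have Mc: "mcp n k u v"
    if uv: "u < n+m+2" "v < n+m+2" "part n u = 1" "part n v \<noteq> 1" "{g u, g v} \<in> M" for u v
  proof -
    have u: "2 \<le> u" "u < n+2" using uv(3) unfolding part_def by (auto split: if_splits)
    have gu: "g u \<in> B" using hg[OF uv(1)] uv(3) by simp
    have gv: "g v \<in> A \<union> C" using hg[OF uv(2)] uv(4) part_le[of n v] by auto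
    have fp: "g v = f (g u)" using fprop[OF gu gv uv(5)] by simp
    have gub: "g u = xb ! (u-2)" using gB u by simp
    from gv consider "g v \<in> A" | "g v \<in> C" by blast
    then show ?thesis
    proof cases
      case 1
      then have "g u \<in> BA" using gu uv(5) unfolding BA_def by auto
      then have inB1: "g u \<in> B1" using B1 by auto
      have lt: "u - 2 < k"
      proof (rule ccontr)
        assume "\<not> u - 2 < k"
        then have "g u = e2 (u-2-k)" using gub xb_nth2[of "u-2"] u by simp
        moreover have "u-2-k < n-k" using u \<open>\<not> u - 2 < k\<close> by linarith
        ultimately have "g u \<in> B2" using e2i by auto
        then show False using inB1 unfolding B2_def by auto
      qed
      then have gue: "g u = e1 (u-2)" using gub xb_nth1 by simp
      have "g (u-2) = h1 (e1 (u-2))" using gA[of "u-2"] xa_nth[OF lt] k_props lt by simp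
      also have "\<dots> = f (g u)" using gue h1(3) \<open>g u \<in> BA\<close> by simp
      also have "\<dots> = g v" using fp by simp
      finally have "g (u-2) = g v" .
      then have "u - 2 = v" using ginj uv(2) uv(1) unfolding inj_on_def by (meson atLeastLessThan_iff le0 less_imp_diff_less)
      then show ?thesis unfolding mcp_def using u lt by auto
    next
      case 2
      then have "g u \<in> BC" using gu uv(5) unfolding BC_def by auto
      then have inB2: "g u \<in> B2" using B2 by auto
      have ge: "k \<le> u - 2"
      proof (rule ccontr)
        assume "\<not> k \<le> u - 2"
        then have "g u = e1 (u-2)" using gub xb_nth1[of "u-2"] by simp
        then have "g u \<in> B1" using e1i \<open>\<not> k \<le> u - 2\<close> by auto
        then show False using inB2 unfolding B2_def by auto
      qed
      define j where "j = u - 2 - k"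
      have jlt: "j < n - k" using u ge unfolding j_def by linarith
      have gue: "g u = e2 j" using gub xb_nth2[of "u-2"] u ge unfolding j_def by simp
      have jm: "n + 2 + j < n+m+2" using jlt k_props m34 by linarith
      have "g (n+2+j) = h2 (e2 j)" using gC[of "n+2+j"] xc_nth[OF jlt] by simp
      also have "\<dots> = f (g u)" using gue h2(3) \<open>g u \<in> BC\<close> by simp
      also have "\<dots> = g v" using fp by simp
      finally have "g (n+2+j) = g v" .
      then have "n+2+j = v" using ginj uv(2) jm unfolding inj_on_def by (meson atLeastLessThan_iff le0)
      then show ?thesis unfolding mcp_def using u ge unfolding j_def by auto
    qed
  qed
  have kk: "(n = 4 \<and> k = 2) \<or> (n = 3 \<and> k = 1) \<or> (n = 3 \<and> k = 2)" unfolding k_def using n34 by auto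
  have "\<exists>L. conc_ok n m k L"
  proof -
    from kk m34 consider "n = 4" "k = 2" "m = 3" | "n = 4" "k = 2" "m = 4" | "n = 3" "k = 2" "m = 3"
      | "n = 3" "k = 2" "m = 4" | "n = 3" "k = 1" "m = 3" | "n = 3" "k = 1" "m = 4" by blast
    then show ?thesis
    proof cases
      case 1 then show ?thesis using conc_L432 by blast
    next
      case 2 then show ?thesis using conc_L442 by blast
    next
      case 3 then show ?thesis using conc_L332 by blast
    next
      case 4 then show ?thesis using conc_L342 by blast
    next
      case 5 then show ?thesis using conc_L331 by blast
    next
      case 6 then show ?thesis using conc_L341 by blast
    qed
  qed
  then obtain L where conc: "conc_ok n m k L" by blast
  show ?thesis
    by (rule transfer[OF graph disj ne bip ginj gim hg Mc conc])
qed

end
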